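(* Let $\varphi$ be an Orlicz integrand. Then the spaces $E_\varphi(\mu)$ and $E^\sigma_\varphi(\mu)$ are almost decomposable with respect to $\mu$.
   Context: $(\Omega,\mathcal{A},\mu)$ measure space with nontrivial positive measure, $X$ a real Banach space. Orlicz integrand: $\varphi\colon\Omega\times X\to[0,\infty]$ with $\varphi(\omega,\cdot)$ even, convex, lsc, proper, $\varphi(\omega,x)\to0$ as $x\to0$, $\varphi(\omega,x)\to\infty$ as $\|x\|\to\infty$ for a.e. $\omega$, and restriction to $A\times W$ being $\mathcal{A}(A)\otimes\mathcal{B}(W)$-measurable for every set $A$ that is a union of countably many atoms and a $\sigma$-finite set and every separable $W\subset X$. $L_\varphi(\mu)$: a.e.-classes of strongly measurable $u\colon\Omega\to X$ with finite Luxemburg norm $\|u\|_\varphi=\inf\{\alpha>0:\int\varphi(\omega,u(\omega)/\alpha)d\mu\le1\}$. $E_\varphi(\mu)$ is the closure in $L_\varphi(\mu)$ of the simple (measurable, finitely-valued) functions belonging to $L_\varphi(\mu)$; $E^\sigma_\varphi(\mu)$ its subset of elements vanishing outside a $\sigma$-finite set. A space $S$ of measurable functions $\Omega\to X$ is almost decomposable if for every $u_0\in S$, every $F\in\mathcal{A}$ with $\mu(F)<\infty$, every $\varepsilon>0$ and every bounded strongly measurable $u_1\colon F\to X$ there is measurable $F_\varepsilon\subset F$ with $\mu(F\setminus F_\varepsilon)<\varepsilon$ such that $u_0\chi_{\Omega\setminus F_\varepsilon}+u_1\chi_{F_\varepsilon}\in S$. *)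

theory Defs
  imports "HOL-Analysis.Analysis"
begin

definition is_atom :: "'a measure \<Rightarrow> 'a set \<Rightarrow> bool" where
  "is_atom M A \<longleftrightarrow> A \<in> sets M \<and> emeasure M A > 0 \<and>
     (\<forall>B\<in>sets M. B \<subseteq> A \<longrightarrow> emeasure M B = 0 \<or> emeasure M (A - B) = 0)"

definition sigma_finite_set :: "'a measure \<Rightarrow> 'a set \<Rightarrow> bool" where
  "sigma_finite_set M S \<longleftrightarrow> (\<exists>A::nat \<Rightarrow> 'a set. range A \<subseteq> sets M \<and>
     (\<forall>i. emeasure M (A i) < \<infinity>) \<and> S = (\<Union>i. A i))"

definition atoms_sigma_finite_set :: "'a measure \<Rightarrow> 'a set \<Rightarrow> bool" where
  "atoms_sigma_finite_set M A \<longleftrightarrow> (\<exists>C S. countable C \<and> (\<forall>c\<in>C. is_atom M c) \<and>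
     sigma_finite_set M S \<and> A = \<Union>C \<union> S)"

definition separable_set :: "'b::real_normed_vector set \<Rightarrow> bool" where
  "separable_set W \<longleftrightarrow> (\<exists>D. countable D \<and> D \<subseteq> W \<and> W \<subseteq> closure D)"

definition strongly_measurable :: "'a measure \<Rightarrow> ('a \<Rightarrow> 'b::real_normed_vector) \<Rightarrow> bool" where
  "strongly_measurable M u \<longleftrightarrow> (\<exists>s::nat \<Rightarrow> 'a \<Rightarrow> 'b. (\<forall>n. simple_function M (s n)) \<and>
     (\<forall>\<omega>\<in>space M. (\<lambda>n. s n \<omega>) \<longlonglongrightarrow> u \<omega>))"

definition lsc_fun :: "('b::topological_space \<Rightarrow> ennreal) \<Rightarrow> bool" where
  "lsc_fun f \<longleftrightarrow> (\<forall>c. closed {x. f x \<le> c})"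

definition convex_fun :: "('b::real_vector \<Rightarrow> ennreal) \<Rightarrow> bool" where
  "convex_fun f \<longleftrightarrow> (\<forall>x y t. 0 \<le> t \<and> t \<le> 1 \<longrightarrow>
     f (t *\<^sub>R x + (1 - t) *\<^sub>R y) \<le> ennreal t * f x + ennreal (1 - t) * f y)"

definition orlicz_integrand :: "'a measure \<Rightarrow> ('a \<Rightarrow> 'b::banach \<Rightarrow> ennreal) \<Rightarrow> bool" where
  "orlicz_integrand M \<phi> \<longleftrightarrow>
     (AE \<omega> in M.
        (\<forall>x. \<phi> \<omega> (- x) = \<phi> \<omega> x) \<and>
        convex_fun (\<phi> \<omega>) \<and>
        lsc_fun (\<phi> \<omega>) \<and>
        (\<exists>x. \<phi> \<omega> x \<noteq> \<infinity>) \<and>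
        (\<phi> \<omega> \<longlongrightarrow> 0) (at 0) \<and>
        (\<phi> \<omega> \<longlongrightarrow> \<infinity>) at_infinity) \<and>
     (\<forall>A W. atoms_sigma_finite_set M A \<longrightarrow> separable_set W \<longrightarrow>
        (\<lambda>(\<omega>, x). \<phi> \<omega> x) \<in> borel_measurable (restrict_space M A \<Otimes>\<^sub>M restrict_space borel W))"

definition lux_norm :: "'a measure \<Rightarrow> ('a \<Rightarrow> 'b::banach \<Rightarrow> ennreal) \<Rightarrow> ('a \<Rightarrow> 'b) \<Rightarrow> real" where
  "lux_norm M \<phi> u = Inf {\<alpha>::real. \<alpha> > 0 \<and> (\<integral>\<^sup>+ \<omega>. \<phi> \<omega> (u \<omega> /\<^sub>R \<alpha>) \<partial>M) \<le> 1}"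

text \<open>Representatives of elements of L_phi: strongly measurable with finite Luxemburg norm
  (i.e. the defining set of the infimum is nonempty).\<close>
definition orlicz_L :: "'a measure \<Rightarrow> ('a \<Rightarrow> 'b::banach \<Rightarrow> ennreal) \<Rightarrow> ('a \<Rightarrow> 'b) set" where
  "orlicz_L M \<phi> = {u. strongly_measurable M u \<and>
     (\<exists>\<alpha>::real. \<alpha> > 0 \<and> (\<integral>\<^sup>+ \<omega>. \<phi> \<omega> (u \<omega> /\<^sub>R \<alpha>) \<partial>M) \<le> 1)}"

definition orlicz_E :: "'a measure \<Rightarrow> ('a \<Rightarrow> 'b::banach \<Rightarrow> ennreal) \<Rightarrow> ('a \<Rightarrow> 'b) set" where
  "orlicz_E M \<phi> = {u \<in> orlicz_L M \<phi>. \<forall>\<epsilon>>0. \<exists>s. simple_function M s \<and> s \<in> orlicz_L M \<phi> \<and>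
     lux_norm M \<phi> (\<lambda>\<omega>. u \<omega> - s \<omega>) < \<epsilon>}"

definition orlicz_E_sigma :: "'a measure \<Rightarrow> ('a \<Rightarrow> 'b::banach \<Rightarrow> ennreal) \<Rightarrow> ('a \<Rightarrow> 'b) set" where
  "orlicz_E_sigma M \<phi> = {u \<in> orlicz_E M \<phi>. \<exists>S. sigma_finite_set M S \<and>
     (AE \<omega> in M. \<omega> \<notin> S \<longrightarrow> u \<omega> = 0)}"

definition almost_decomposable :: "'a measure \<Rightarrow> ('a \<Rightarrow> 'b::real_normed_vector) set \<Rightarrow> bool" where
  "almost_decomposable M S \<longleftrightarrow>
     (\<forall>u0\<in>S. \<forall>F\<in>sets M. emeasure M F < \<infinity> \<longrightarrow> (\<forall>\<epsilon>::real. \<epsilon> > 0 \<longrightarrow>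
       (\<forall>u1. strongly_measurable (restrict_space M F) u1 \<and> (\<exists>C. \<forall>\<omega>\<in>F. norm (u1 \<omega>) \<le> C) \<longrightarrow>
         (\<exists>F\<^sub>\<epsilon>\<in>sets M. F\<^sub>\<epsilon> \<subseteq> F \<and> emeasure M (F - F\<^sub>\<epsilon>) < ennreal \<epsilon> \<and>
            (\<lambda>\<omega>. if \<omega> \<in> F\<^sub>\<epsilon> then u1 \<omega> else u0 \<omega>) \<in> S))))"

end

theory Submission
  imports Defs
begin



lemma nn_split_le:
  assumes A[measurable]: "A \<in> sets M"
  shows "(\<integral>\<^sup>+x. (if x \<in> A then f x else g x) \<partial>M) \<le>
     (\<integral>\<^sup>+x. (if x \<in> A then f x else 0) \<partial>M) + (\<integral>\<^sup>+x. (if x \<in> A then 0 else g x) \<partial>M)"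
proof -
  have *: "integral\<^sup>S M h \<le> (\<integral>\<^sup>+x. (if x \<in> A then f x else 0) \<partial>M) + (\<integral>\<^sup>+x. (if x \<in> A then 0 else g x) \<partial>M)"
    if h: "simple_function M h" "h \<le> (\<lambda>x. if x \<in> A then f x else g x)" for h
  proof -
    have [measurable]: "h \<in> borel_measurable M" using h(1) by (rule borel_measurable_simple_function)
    have "integral\<^sup>S M h = integral\<^sup>N M h" using h(1) by (simp add: nn_integral_eq_simple_integral)
    also have "\<dots> = (\<integral>\<^sup>+x. (if x \<in> A then h x else 0) + (if x \<in> A then 0 else h x) \<partial>M)"
      by (intro nn_integral_cong) simp
    also have "\<dots> = (\<integral>\<^sup>+x. (if x \<in> A then h x else 0) \<partial>M) + (\<integral>\<^sup>+x. (if x \<in> A then 0 else h x) \<partial>M)"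
      by (rule nn_integral_add) measurable
    also have "\<dots> \<le> (\<integral>\<^sup>+x. (if x \<in> A then f x else 0) \<partial>M) + (\<integral>\<^sup>+x. (if x \<in> A then 0 else g x) \<partial>M)"
    proof (intro add_mono nn_integral_mono)
      fix x show "(if x \<in> A then h x else 0) \<le> (if x \<in> A then f x else 0)"
        using le_funD[OF h(2), of x] by (cases "x \<in> A") auto
      show "(if x \<in> A then 0 else h x) \<le> (if x \<in> A then 0 else g x)"
        using le_funD[OF h(2), of x] by (cases "x \<in> A") auto
    qed
    finally show ?thesis .
  qed
  show ?thesis
    unfolding nn_integral_def[of M "\<lambda>x. if x \<in> A then f x else g x"]
    by (rule SUP_least) (use * in blast)
qed

lemma nn_cmult_le:
  assumes "0 \<le> c"
  shows "(\<integral>\<^sup>+x. ennreal c * f x \<partial>M) \<le> ennreal c * integral\<^sup>N M f"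
proof (cases "c = 0")
  case True then show ?thesis by simp
next
  case False
  have *: "integral\<^sup>S M h \<le> ennreal c * integral\<^sup>N M f"
    if h: "simple_function M h" "h \<le> (\<lambda>x. ennreal c * f x)" for h
  proof -
    have s: "simple_function M (\<lambda>x. ennreal (1/c) * h x)" using h(1) by auto
    have eq: "h = (\<lambda>x. ennreal c * (ennreal (1/c) * h x))"
      using False assms by (auto simp: ennreal_mult[symmetric] mult.assoc[symmetric])
    have "integral\<^sup>S M h = ennreal c * integral\<^sup>S M (\<lambda>x. ennreal (1/c) * h x)"
      by (subst eq) (simp add: s)
    also have "\<dots> = ennreal c * integral\<^sup>N M (\<lambda>x. ennreal (1/c) * h x)"
      using s by (simp add: nn_integral_eq_simple_integral)
    also have "\<dots> \<le> ennreal c * integral\<^sup>N M f"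
    proof (intro mult_left_mono nn_integral_mono)
      fix x
      have "ennreal (1/c) * h x \<le> ennreal (1/c) * (ennreal c * f x)"
        using h(2) by (intro mult_left_mono) (auto simp: le_fun_def)
      also have "\<dots> = f x" using False assms
        by (simp add: mult.assoc[symmetric] ennreal_mult[symmetric])
      finally show "ennreal (1/c) * h x \<le> f x" .
    qed simp
    finally show ?thesis .
  qed
  show ?thesis
    unfolding nn_integral_def[of M "\<lambda>x. ennreal c * f x"]
    by (rule SUP_least) (use * in auto)
qed



definition good_fun :: "('b::banach \<Rightarrow> ennreal) \<Rightarrow> bool" where
  "good_fun f \<longleftrightarrow> (\<forall>x. f (- x) = f x) \<and> convex_fun f \<and> lsc_fun f \<and> (\<exists>x. f x \<noteq> \<infinity>) \<and>
     (f \<longlongrightarrow> 0) (at 0) \<and> (f \<longlongrightarrow> \<infinity>) at_infinity"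

lemma good_zero:
  fixes f :: "'b::banach \<Rightarrow> ennreal"
  assumes g: "good_fun f" and v: "(v::'b) \<noteq> 0"
  shows "f 0 = 0"
proof -
  have le: "f 0 \<le> f x" for x
  proof -
    have "f 0 = f ((1/2) *\<^sub>R x + (1 - 1/2) *\<^sub>R (- x))"
      by (simp add: scaleR_diff_left)
    also have "\<dots> \<le> ennreal (1/2) * f x + ennreal (1 - 1/2) * f (- x)"
      using g[unfolded good_fun_def convex_fun_def, THEN conjunct2, THEN conjunct1, rule_format, of "1/2" x "-x"] by simp
    also have "\<dots> = (ennreal (1/2) + ennreal (1/2)) * f x"
      using g unfolding good_fun_def by (simp add: distrib_right)
    also have "\<dots> = f x" by (subst ennreal_plus[symmetric]) auto
    finally show ?thesis .
  qed
  show ?thesis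
  proof (rule ccontr)
    assume "f 0 \<noteq> 0"
    then have "0 < f 0" by (simp add: zero_less_iff_neq_zero)
    with g have "eventually (\<lambda>x. f x < f 0) (at 0)"
      unfolding good_fun_def using order_tendstoD(2) by blast
    then obtain d where d: "d > 0" "\<And>x. x \<noteq> 0 \<Longrightarrow> dist x 0 < d \<Longrightarrow> f x < f 0"
      unfolding eventually_at by auto
    define x where "x = (d / (2 * norm v)) *\<^sub>R v"
    have "x \<noteq> 0" using v d by (simp add: x_def)
    moreover have "dist x 0 < d" using v d by (simp add: x_def)
    ultimately have "f x < f 0" by (rule d(2))
    with le[of x] show False by simp
  qed
qed

lemma good_scale:
  fixes f :: "'b::banach \<Rightarrow> ennreal"
  assumes g: "convex_fun f" and z: "f 0 = 0" and t: "0 \<le> t" "t \<le> 1"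
  shows "f (t *\<^sub>R x) \<le> ennreal t * f x"
proof -
  have "f (t *\<^sub>R x) = f (t *\<^sub>R x + (1 - t) *\<^sub>R 0)" by simp
  also have "\<dots> \<le> ennreal t * f x + ennreal (1 - t) * f 0"
    using g t unfolding convex_fun_def by blast
  finally show ?thesis using z by simp
qed

lemma comb:
  fixes \<phi> :: "'a \<Rightarrow> 'b::banach \<Rightarrow> ennreal"
  assumes AE: "AE \<omega> in M. \<phi> \<omega> 0 = 0 \<and> convex_fun (\<phi> \<omega>)"
    and A: "A \<in> sets M" and a1: "\<alpha>1 > 0" and a2: "\<alpha>2 > 0"
    and h1: "(\<integral>\<^sup>+\<omega>. (if \<omega> \<in> A then 0 else \<phi> \<omega> (v \<omega> /\<^sub>R \<alpha>1)) \<partial>M) \<le> 1"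
    and h2: "(\<integral>\<^sup>+\<omega>. (if \<omega> \<in> A then \<phi> \<omega> (v \<omega> /\<^sub>R \<alpha>2) else 0) \<partial>M) \<le> 1"
  shows "(\<integral>\<^sup>+\<omega>. \<phi> \<omega> (v \<omega> /\<^sub>R (\<alpha>1 + \<alpha>2)) \<partial>M) \<le> 1"
proof -
  define l where "l = \<alpha>1 / (\<alpha>1 + \<alpha>2)"
  have l: "0 \<le> l" "l \<le> 1" "0 \<le> 1 - l" "1 - l \<le> 1" using a1 a2 by (auto simp: l_def field_simps)
  have e1: "y /\<^sub>R (\<alpha>1 + \<alpha>2) = l *\<^sub>R (y /\<^sub>R \<alpha>1)" for y :: 'b
  proof -
    have "l * inverse \<alpha>1 = inverse (\<alpha>1 + \<alpha>2)" using a1 a2 by (simp add: l_def field_simps)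
    then show ?thesis by (simp add: scaleR_scaleR)
  qed
  have e2: "y /\<^sub>R (\<alpha>1 + \<alpha>2) = (1 - l) *\<^sub>R (y /\<^sub>R \<alpha>2)" for y :: 'b
  proof -
    have "1 - l = \<alpha>2 / (\<alpha>1 + \<alpha>2)" using a1 a2 by (simp add: l_def field_simps)
    then show ?thesis using a1 a2 by (simp add: inverse_eq_divide)
  qed
  have "(\<integral>\<^sup>+\<omega>. \<phi> \<omega> (v \<omega> /\<^sub>R (\<alpha>1 + \<alpha>2)) \<partial>M) \<le>
      (\<integral>\<^sup>+\<omega>. (if \<omega> \<in> A then ennreal (1 - l) * \<phi> \<omega> (v \<omega> /\<^sub>R \<alpha>2) else ennreal l * \<phi> \<omega> (v \<omega> /\<^sub>R \<alpha>1)) \<partial>M)"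
  proof (rule nn_integral_mono_AE)
    show "AE \<omega> in M. \<phi> \<omega> (v \<omega> /\<^sub>R (\<alpha>1 + \<alpha>2)) \<le>
      (if \<omega> \<in> A then ennreal (1 - l) * \<phi> \<omega> (v \<omega> /\<^sub>R \<alpha>2) else ennreal l * \<phi> \<omega> (v \<omega> /\<^sub>R \<alpha>1))"
      using AE
    proof eventually_elim
      case (elim \<omega>)
      show ?case
      proof (cases "\<omega> \<in> A")
        case True
        have "\<phi> \<omega> (v \<omega> /\<^sub>R (\<alpha>1 + \<alpha>2)) = \<phi> \<omega> ((1 - l) *\<^sub>R (v \<omega> /\<^sub>R \<alpha>2))"
          by (simp only: e2)
        also have "\<dots> \<le> ennreal (1 - l) * \<phi> \<omega> (v \<omega> /\<^sub>R \<alpha>2)"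
          using elim l by (intro good_scale) auto
        finally show ?thesis using True by simp
      next
        case False
        have "\<phi> \<omega> (v \<omega> /\<^sub>R (\<alpha>1 + \<alpha>2)) = \<phi> \<omega> (l *\<^sub>R (v \<omega> /\<^sub>R \<alpha>1))"
          by (simp only: e1)
        also have "\<dots> \<le> ennreal l * \<phi> \<omega> (v \<omega> /\<^sub>R \<alpha>1)"
          using elim l by (intro good_scale) auto
        finally show ?thesis using False by simp
      qed
    qed
  qed
  also have "\<dots> \<le> (\<integral>\<^sup>+\<omega>. (if \<omega> \<in> A then ennreal (1 - l) * \<phi> \<omega> (v \<omega> /\<^sub>R \<alpha>2) else 0) \<partial>M)
     + (\<integral>\<^sup>+\<omega>. (if \<omega> \<in> A then 0 else ennreal l * \<phi> \<omega> (v \<omega> /\<^sub>R \<alpha>1)) \<partial>M)"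
    by (rule nn_split_le[OF A])
  also have "\<dots> = (\<integral>\<^sup>+\<omega>. ennreal (1 - l) * (if \<omega> \<in> A then \<phi> \<omega> (v \<omega> /\<^sub>R \<alpha>2) else 0) \<partial>M)
     + (\<integral>\<^sup>+\<omega>. ennreal l * (if \<omega> \<in> A then 0 else \<phi> \<omega> (v \<omega> /\<^sub>R \<alpha>1)) \<partial>M)"
    by (intro arg_cong2[where f="(+)"] nn_integral_cong) auto
  also have "\<dots> \<le> ennreal (1 - l) * 1 + ennreal l * 1"
    by (intro add_mono order.trans[OF nn_cmult_le] mult_left_mono h1 h2) (use l in auto)
  also have "\<dots> = 1" using l by (simp flip: ennreal_plus)
  finally show ?thesis .
qed



lemma closure_D:
  fixes R0 :: "'b::real_normed_vector set"
  assumes a: "a \<in> closure R0" and b: "b \<in> closure R0"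
  shows "c *\<^sub>R (a - b) \<in> closure ((\<lambda>(q,a,b). q *\<^sub>R (a - b)) ` (\<rat> \<times> R0 \<times> R0))"
proof -
  obtain sa where sa: "\<And>n. sa n \<in> R0" "sa \<longlonglongrightarrow> a" using a unfolding closure_sequential by blast
  obtain sb where sb: "\<And>n. sb n \<in> R0" "sb \<longlonglongrightarrow> b" using b unfolding closure_sequential by blast
  have "\<forall>n. \<exists>r. r \<in> \<rat> \<and> (c - inverse (real (Suc n)) < r \<and> r < c + inverse (real (Suc n)))"
  proof
    fix n
    have "c - inverse (real (Suc n)) < c + inverse (real (Suc n))" by simp
    from Rats_dense_in_real[OF this] show "\<exists>r. r \<in> \<rat> \<and> (c - inverse (real (Suc n)) < r \<and> r < c + inverse (real (Suc n)))"
      by blast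
  qed
  from choice[OF this] obtain q where q0: "\<forall>n. q n \<in> \<rat> \<and> (c - inverse (real (Suc n)) < q n \<and> q n < c + inverse (real (Suc n)))"
    by blast
  have q: "\<And>n. q n \<in> \<rat>" "\<And>n. c - inverse (real (Suc n)) < q n \<and> q n < c + inverse (real (Suc n))"
    using q0 by auto
  have "q \<longlonglongrightarrow> c"
  proof (rule real_tendsto_sandwich[of "\<lambda>n. c - inverse (real (Suc n))" _ _ "\<lambda>n. c + inverse (real (Suc n))"])
    show "\<forall>\<^sub>F n in sequentially. c - inverse (real (Suc n)) \<le> q n" using q(2) by (simp add: less_imp_le)
    show "\<forall>\<^sub>F n in sequentially. q n \<le> c + inverse (real (Suc n))" using q(2) by (simp add: less_imp_le)
    show "(\<lambda>n. c - inverse (real (Suc n))) \<longlonglongrightarrow> c"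
      using tendsto_diff[OF tendsto_const LIMSEQ_inverse_real_of_nat, of c] by simp
    show "(\<lambda>n. c + inverse (real (Suc n))) \<longlonglongrightarrow> c"
      using tendsto_add[OF tendsto_const LIMSEQ_inverse_real_of_nat, of c] by simp
  qed
  then have "(\<lambda>n. q n *\<^sub>R (sa n - sb n)) \<longlonglongrightarrow> c *\<^sub>R (a - b)"
    by (intro tendsto_intros sa(2) sb(2))
  moreover have "q n *\<^sub>R (sa n - sb n) \<in> (\<lambda>(q,a,b). q *\<^sub>R (a - b)) ` (\<rat> \<times> R0 \<times> R0)" for n
    by (rule image_eqI[where x="(q n, sa n, sb n)"]) (simp_all add: q(1) sa(1) sb(1))
  ultimately show ?thesis unfolding closure_sequential by (intro exI[of _ "\<lambda>n. q n *\<^sub>R (sa n - sb n)"] conjI allI)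
qed

lemma lsc_D:
  fixes f :: "'b::real_normed_vector \<Rightarrow> ennreal"
  assumes lsc: "lsc_fun f" and D: "\<forall>d\<in>D. norm d < r \<longrightarrow> f d \<le> c"
    and x: "x \<in> closure D" "norm x < r"
  shows "f x \<le> c"
proof -
  have "x \<in> ball 0 r \<inter> closure D" using x by auto
  also have "\<dots> \<subseteq> closure (ball 0 r \<inter> D)" by (rule open_Int_closure_subset) simp
  also have "\<dots> \<subseteq> {y. f y \<le> c}"
    by (rule closure_minimal) (use D lsc in \<open>auto simp: lsc_fun_def\<close>)
  finally show ?thesis by simp
qed

lemma simple_glue:
  fixes f g :: "'a \<Rightarrow> 'b::real_normed_vector"
  assumes A: "A \<in> sets M" "A \<subseteq> F" and F: "F \<in> sets M"
    and f: "simple_function (restrict_space M F) f" and g: "simple_function M g"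
  shows "simple_function M (\<lambda>x. if x \<in> A then f x else g x)"
proof (rule simple_function_borel_measurable)
  have sF: "space (restrict_space M F) = F" using F sets.sets_into_space by (auto simp: space_restrict_space)
  have "f \<in> borel_measurable (restrict_space M F)" using f by (rule borel_measurable_simple_function)
  then have f': "(\<lambda>x. if x \<in> F then f x else 0) \<in> borel_measurable M"
    using F by (subst (asm) measurable_restrict_space_iff[where c=0]) auto
  have "(\<lambda>x. if x \<in> A then (if x \<in> F then f x else 0) else g x) \<in> borel_measurable M"
    by (rule measurable_If_set[OF f' borel_measurable_simple_function[OF g]]) (use A in auto)
  moreover have "(\<lambda>x. if x \<in> A then (if x \<in> F then f x else 0) else g x) = (\<lambda>x. if x \<in> A then f x else g x)"
    using A by (intro ext) auto
  ultimately show "(\<lambda>x. if x \<in> A then f x else g x) \<in> borel_measurable M" by simp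
  have "(\<lambda>x. if x \<in> A then f x else g x) ` space M \<subseteq> f ` space (restrict_space M F) \<union> g ` space M"
    using A sF sets.sets_into_space by auto
  moreover have "finite (f ` space (restrict_space M F))" using f by (rule simple_functionD)
  moreover have "finite (g ` space M)" using g by (rule simple_functionD)
  ultimately show "finite ((\<lambda>x. if x \<in> A then f x else g x) ` space M)"
    by (meson finite_UnI finite_subset)
qed

lemma simple_strongly: "simple_function M s \<Longrightarrow> strongly_measurable M s"
  unfolding strongly_measurable_def by (intro exI[of _ "\<lambda>n. s"]) auto

lemma phi_d_meas:
  fixes \<phi> :: "'a \<Rightarrow> 'b::banach \<Rightarrow> ennreal"
  assumes oi: "orlicz_integrand M \<phi>" and F: "F \<in> sets M" "emeasure M F < \<infinity>"
  shows "{\<omega> \<in> F. \<phi> \<omega> d \<le> c} \<in> sets M"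
proof -
  have sF: "space (restrict_space M F) = F" using F sets.sets_into_space by (auto simp: space_restrict_space)
  have asf: "atoms_sigma_finite_set M F"
    unfolding atoms_sigma_finite_set_def sigma_finite_set_def
    by (intro exI[of _ "{}"] exI[of _ F] conjI exI[of _ "\<lambda>i. F"]) (use F in auto)
  have sep: "separable_set {d}" unfolding separable_set_def by (intro exI[of _ "{d}"]) auto
  have jm: "(\<lambda>(\<omega>, x). \<phi> \<omega> x) \<in> borel_measurable (restrict_space M F \<Otimes>\<^sub>M restrict_space borel {d})"
    using oi asf sep unfolding orlicz_integrand_def by blast
  have pm: "(\<lambda>\<omega>. (\<omega>, d)) \<in> measurable (restrict_space M F) (restrict_space M F \<Otimes>\<^sub>M restrict_space borel {d})"
    by (rule measurable_Pair[OF measurable_ident_sets[OF refl] measurable_const])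
       (simp add: space_restrict_space)
  have "(\<lambda>\<omega>. \<phi> \<omega> d) \<in> borel_measurable (restrict_space M F)"
    using measurable_compose[OF pm jm] by simp
  then have "{\<omega> \<in> space (restrict_space M F). \<phi> \<omega> d \<le> c} \<in> sets (restrict_space M F)"
    by measurable
  then show ?thesis using F by (simp add: sF sets_restrict_space_iff)
qed



lemma small_norm:
  fixes x :: "'b::real_normed_vector"
  assumes "norm x \<le> K"
  shows "norm (x /\<^sub>R ((K + 1) * real (Suc k))) < 1 / real (Suc k)"
proof -
  have K: "0 \<le> K" using assms norm_ge_zero order_trans by blast
  have a: "(K + 1) * real (Suc k) > 0" using K by simp
  have "norm (x /\<^sub>R ((K + 1) * real (Suc k))) = norm x / ((K + 1) * real (Suc k))"
  proof -
    have "norm (x /\<^sub>R c) = norm x / c" if "c > 0" for c :: real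
      using that by (simp add: divide_inverse_commute)
    then show ?thesis using a by blast
  qed
  also have "\<dots> \<le> K / ((K + 1) * real (Suc k))" using assms a by (simp add: divide_right_mono)
  also have "\<dots> = (K / (K + 1)) * (1 / real (Suc k))" by simp
  also have "\<dots> < 1 * (1 / real (Suc k))" by (intro mult_strict_right_mono) (use K in auto)
  finally show ?thesis by simp
qed

lemma simple_bound:
  fixes f :: "'a \<Rightarrow> 'b::real_normed_vector"
  assumes "simple_function M f"
  shows "\<exists>K\<ge>0. \<forall>\<omega>\<in>space M. norm (f \<omega>) \<le> K"
proof -
  have "finite (f ` space M)" using assms by (rule simple_functionD)
  then have "bounded (f ` space M)" by (rule finite_imp_bounded)
  then obtain a where "\<forall>x\<in>f ` space M. norm x \<le> a" unfolding bounded_iff by blast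
  then show ?thesis by (intro exI[of _ "\<bar>a\<bar>"]) force
qed

lemma main_glue:
  fixes M :: "'a measure" and \<phi> :: "'a \<Rightarrow> 'b::banach \<Rightarrow> ennreal"
  assumes oi: "orlicz_integrand M \<phi>"
    and u0: "u0 \<in> orlicz_E M \<phi>" and F: "F \<in> sets M" "emeasure M F < \<infinity>" and eps: "\<epsilon> > 0"
    and u1m: "strongly_measurable (restrict_space M F) u1" and C: "\<forall>\<omega>\<in>F. norm (u1 \<omega>) \<le> C"
  shows "\<exists>Fe\<in>sets M. Fe \<subseteq> F \<and> emeasure M (F - Fe) < ennreal \<epsilon> \<and>
           (\<lambda>\<omega>. if \<omega> \<in> Fe then u1 \<omega> else u0 \<omega>) \<in> orlicz_E M \<phi>"
proof (cases "\<forall>x::'b. x = 0")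
  case True
  then have "(\<lambda>\<omega>. if \<omega> \<in> F then u1 \<omega> else u0 \<omega>) = u0" by (intro ext) metis
  then show ?thesis using F eps u0 by (intro bexI[of _ F]) auto
next
  case False
  then obtain v :: 'b where v: "v \<noteq> 0" by blast
  have Fsp: "F \<subseteq> space M" using F(1) sets.sets_into_space by blast
  have F': "F \<inter> space M \<in> sets M" using F Fsp by (simp add: Int_absorb2)
  have sF: "space (restrict_space M F) = F" using Fsp by (auto simp: space_restrict_space)
  have AEg: "AE \<omega> in M. good_fun (\<phi> \<omega>)" using oi unfolding orlicz_integrand_def good_fun_def by simp
  have AE0: "AE \<omega> in M. \<phi> \<omega> 0 = 0 \<and> convex_fun (\<phi> \<omega>)"
    using AEg by eventually_elim (use good_zero v in \<open>auto simp: good_fun_def\<close>)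
  from AEg obtain N where N: "{\<omega>\<in>space M. \<not> good_fun (\<phi> \<omega>)} \<subseteq> N" "emeasure M N = 0" "N \<in> sets M"
    by (auto elim!: AE_E)
  define Lset where "Lset w = {\<alpha>::real. \<alpha> > 0 \<and> (\<integral>\<^sup>+\<omega>. \<phi> \<omega> (w \<omega> /\<^sub>R \<alpha>) \<partial>M) \<le> 1}" for w :: "'a \<Rightarrow> 'b"
  have lux: "lux_norm M \<phi> w = Inf (Lset w)" for w unfolding lux_norm_def Lset_def by simp
  have Lin: "w \<in> orlicz_L M \<phi> \<longleftrightarrow> strongly_measurable M w \<and> Lset w \<noteq> {}" for w
    unfolding orlicz_L_def Lset_def by auto
  have lux_le: "lux_norm M \<phi> w \<le> \<alpha>" if "\<alpha> \<in> Lset w" for \<alpha> w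
    unfolding lux by (rule cInf_lower[OF that]) (auto simp: Lset_def bdd_below_def intro!: exI[of _ 0])

  from u0 obtain T0 where T0: "\<And>n. simple_function M (T0 n)" "\<And>\<omega>. \<omega> \<in> space M \<Longrightarrow> (\<lambda>n. T0 n \<omega>) \<longlonglongrightarrow> u0 \<omega>"
    unfolding orlicz_E_def orlicz_L_def strongly_measurable_def by blast
  from u0 obtain \<alpha>u where \<alpha>u: "\<alpha>u \<in> Lset u0" unfolding orlicz_E_def Lin by blast
  have "\<forall>n. \<exists>s. simple_function M s \<and> s \<in> orlicz_L M \<phi> \<and> lux_norm M \<phi> (\<lambda>\<omega>. u0 \<omega> - s \<omega>) < 1 / real (Suc n)"
    using u0 unfolding orlicz_E_def by simp
  then obtain S0 where S0': "\<forall>n. simple_function M (S0 n) \<and> S0 n \<in> orlicz_L M \<phi> \<and>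
      lux_norm M \<phi> (\<lambda>\<omega>. u0 \<omega> - S0 n \<omega>) < 1 / real (Suc n)"
    by (auto dest!: choice)
  have S0: "\<And>n. simple_function M (S0 n)" "\<And>n. S0 n \<in> orlicz_L M \<phi>"
    "\<And>n. lux_norm M \<phi> (\<lambda>\<omega>. u0 \<omega> - S0 n \<omega>) < 1 / real (Suc n)"
    using S0' by auto
  from u1m obtain T1 where T1: "\<And>n. simple_function (restrict_space M F) (T1 n)"
    "\<And>\<omega>. \<omega> \<in> F \<Longrightarrow> (\<lambda>n. T1 n \<omega>) \<longlonglongrightarrow> u1 \<omega>"
    unfolding strongly_measurable_def sF by blast

  define R0 where "R0 = insert 0 (\<Union>n. T0 n ` space M \<union> T1 n ` F \<union> S0 n ` space M)"
  define D where "D = (\<lambda>(q,a,b). q *\<^sub>R (a - b)) ` (\<rat> \<times> R0 \<times> R0)"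
  have cR0: "countable R0" unfolding R0_def
    using simple_functionD(1)[OF T0(1)] simple_functionD(1)[OF T1(1)] simple_functionD(1)[OF S0(1)] sF
    by (intro countable_insert countable_UN[OF countableI_type] countable_Un countable_finite) auto
  have cD: "countable D" unfolding D_def using cR0 countable_rat by auto
  have inR0: "0 \<in> R0" "\<And>n \<omega>. \<omega> \<in> space M \<Longrightarrow> T0 n \<omega> \<in> R0" "\<And>n \<omega>. \<omega> \<in> F \<Longrightarrow> T1 n \<omega> \<in> R0"
    "\<And>n \<omega>. \<omega> \<in> space M \<Longrightarrow> S0 n \<omega> \<in> R0"
    unfolding R0_def by auto
  have D0: "D \<noteq> {}" unfolding D_def using inR0(1) by auto
  have clu0: "u0 \<omega> \<in> closure R0" if "\<omega> \<in> space M" for \<omega>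
    unfolding closure_sequential by (intro exI[of _ "\<lambda>n. T0 n \<omega>"] conjI allI inR0(2)[OF that] T0(2)[OF that])
  have clu1: "u1 \<omega> \<in> closure R0" if "\<omega> \<in> F" for \<omega>
    unfolding closure_sequential by (intro exI[of _ "\<lambda>n. T1 n \<omega>"] conjI allI inR0(3)[OF that] T1(2)[OF that])
  have clR: "x \<in> closure R0" if "x \<in> R0" for x using closure_subset that by blast
  have clD: "c *\<^sub>R (a - b) \<in> closure D" if "a \<in> closure R0" "b \<in> closure R0" for a b c
    unfolding D_def by (rule closure_D[OF that])

  define c0 where "c0 = 1 / (enn2real (emeasure M F) + 1)"
  have c0: "c0 > 0" unfolding c0_def by (simp add: add_nonneg_pos)
  have c0A: "ennreal c0 * emeasure M A \<le> 1" if "A \<in> sets M" "A \<subseteq> F" for A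
  proof -
    have "emeasure M A \<le> emeasure M F" using that F by (intro emeasure_mono) auto
    also have "\<dots> = ennreal (enn2real (emeasure M F))" using F(2) by (simp add: ennreal_enn2real_if)
    finally have "ennreal c0 * emeasure M A \<le> ennreal c0 * ennreal (enn2real (emeasure M F))"
      by (intro mult_left_mono) auto
    also have "\<dots> = ennreal (c0 * enn2real (emeasure M F))" using c0 by (simp add: ennreal_mult)
    also have "\<dots> \<le> 1"
    proof -
      have "c0 * enn2real (emeasure M F) \<le> 1" unfolding c0_def by (simp add: divide_le_eq_1 add_nonneg_pos)
      then show ?thesis by simp
    qed
    finally show ?thesis .
  qed

  define H where "H k = {\<omega> \<in> F. \<forall>d\<in>D. norm d < 1 / real (Suc k) \<longrightarrow> \<phi> \<omega> d \<le> ennreal c0}" for k :: nat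
  have Hs: "H k \<in> sets M" for k
  proof -
    have "H k = F \<inter> (\<Inter>d\<in>D. if norm d < 1 / real (Suc k) then {\<omega> \<in> F. \<phi> \<omega> d \<le> ennreal c0} else F)"
      unfolding H_def using D0 by auto
    also have "\<dots> \<in> sets M"
      using F phi_d_meas[OF oi F] cD D0 by (intro sets.Int sets.countable_INT') auto
    finally show ?thesis .
  qed
  have Hmono: "H k \<subseteq> H k'" if "k \<le> k'" for k k'
  proof -
    have "1 / real (Suc k') \<le> 1 / real (Suc k)" using that by (simp add: frac_le)
    then show ?thesis unfolding H_def by force
  qed
  have Hgood: "\<exists>k. \<omega> \<in> H k" if "\<omega> \<in> F" "good_fun (\<phi> \<omega>)" for \<omega>
  proof -
    have z: "\<phi> \<omega> 0 = 0" using good_zero[OF that(2) v] .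
    have "eventually (\<lambda>x. \<phi> \<omega> x < ennreal c0) (at 0)"
      using that(2) c0 unfolding good_fun_def by (intro order_tendstoD(2)) auto
    then obtain \<delta> where \<delta>: "\<delta> > 0" "\<And>x. x \<noteq> 0 \<Longrightarrow> dist x 0 < \<delta> \<Longrightarrow> \<phi> \<omega> x < ennreal c0"
      unfolding eventually_at by auto
    obtain k where k: "inverse (real (Suc k)) < \<delta>" using reals_Archimedean[OF \<delta>(1)] by blast
    have "\<phi> \<omega> d \<le> ennreal c0" if "d \<in> D" "norm d < 1 / real (Suc k)" for d
    proof (cases "d = 0")
      case True then show ?thesis using z by simp
    next
      case False
      have "dist d 0 < \<delta>" using that(2) k by (simp add: inverse_eq_divide)
      then show ?thesis using \<delta>(2)[OF False] by (simp add: less_imp_le)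
    qed
    then have "\<omega> \<in> H k" unfolding H_def using that(1) by blast
    then show ?thesis ..
  qed
  have "(\<lambda>k. emeasure M (F - H k)) \<longlonglongrightarrow> emeasure M (\<Inter>k. F - H k)"
  proof (rule Lim_emeasure_decseq)
    show "range (\<lambda>k. F - H k) \<subseteq> sets M" using Hs F by auto
    show "decseq (\<lambda>k. F - H k)" using Hmono unfolding decseq_def by blast
    show "emeasure M (F - H k) \<noteq> \<infinity>" for k
      using F emeasure_mono[of "F - H k" F M] by (auto simp: top_unique)
  qed
  moreover have "emeasure M (\<Inter>k. F - H k) = 0"
  proof -
    have "(\<Inter>k. F - H k) \<subseteq> N" using Hgood N(1) Fsp by blast
    then have "emeasure M (\<Inter>k. F - H k) \<le> emeasure M N" using N(3) by (intro emeasure_mono) auto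
    then show ?thesis using N(2) by simp
  qed
  ultimately have "eventually (\<lambda>k. emeasure M (F - H k) < ennreal (\<epsilon>/4)) sequentially"
    using eps by (intro order_tendstoD(2)) auto
  then obtain k where k: "emeasure M (F - H k) < ennreal (\<epsilon>/4)"
    unfolding eventually_sequentially by blast

  have T1m: "T1 n \<in> borel_measurable (restrict_space M F)" for n
    using T1(1) by (rule borel_measurable_simple_function)
  define G where "G m n = {\<omega> \<in> F. \<forall>j. n \<le> j \<longrightarrow> norm (T1 j \<omega> - u1 \<omega>) < 1 / real (Suc m)}" for m n :: nat
  have Gs: "G m n \<in> sets M" for m n
  proof -
    have nmj: "(\<lambda>\<omega>. norm (T1 j \<omega> - u1 \<omega>)) \<in> borel_measurable (restrict_space M F)" for j
    proof (rule borel_measurable_LIMSEQ_metric[of "\<lambda>i \<omega>. norm (T1 j \<omega> - T1 i \<omega>)"])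
      show "(\<lambda>\<omega>. norm (T1 j \<omega> - T1 i \<omega>)) \<in> borel_measurable (restrict_space M F)" for i
        by (rule borel_measurable_simple_function, rule simple_function_compose2[OF T1(1) T1(1)])
      show "(\<lambda>i. norm (T1 j \<omega> - T1 i \<omega>)) \<longlonglongrightarrow> norm (T1 j \<omega> - u1 \<omega>)" if "\<omega> \<in> space (restrict_space M F)" for \<omega>
        using that sF by (intro tendsto_intros T1(2)) auto
    qed
    have "{\<omega> \<in> space (restrict_space M F). \<forall>j. n \<le> j \<longrightarrow> norm (T1 j \<omega> - u1 \<omega>) < 1 / real (Suc m)}
        \<in> sets (restrict_space M F)"
    proof -
      have e: "{\<omega> \<in> space (restrict_space M F). norm (T1 j \<omega> - u1 \<omega>) < 1 / real (Suc m)} \<in> sets (restrict_space M F)" for j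
      proof -
        have "(\<lambda>\<omega>. norm (T1 j \<omega> - u1 \<omega>)) -` {..< 1 / real (Suc m)} \<inter> space (restrict_space M F) \<in> sets (restrict_space M F)"
          by (rule measurable_sets[OF nmj]) simp
        moreover have "(\<lambda>\<omega>. norm (T1 j \<omega> - u1 \<omega>)) -` {..< 1 / real (Suc m)} \<inter> space (restrict_space M F) =
            {\<omega> \<in> space (restrict_space M F). norm (T1 j \<omega> - u1 \<omega>) < 1 / real (Suc m)}" by auto
        ultimately show ?thesis by simp
      qed
      have "{\<omega> \<in> space (restrict_space M F). \<forall>j. n \<le> j \<longrightarrow> norm (T1 j \<omega> - u1 \<omega>) < 1 / real (Suc m)} =
          (\<Inter>j\<in>{n..}. {\<omega> \<in> space (restrict_space M F). norm (T1 j \<omega> - u1 \<omega>) < 1 / real (Suc m)})" by auto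
      also have "\<dots> \<in> sets (restrict_space M F)"
        by (rule sets.countable_INT') (use e in auto)
      finally show ?thesis .
    qed
    then have "G m n \<in> sets (restrict_space M F)" unfolding sF G_def .
    then show ?thesis using sets_restrict_space_iff[OF F'] by blast
  qed
  have Gsmall: "\<exists>n. emeasure M (F - G m n) < ennreal (\<epsilon>/4 * (1/2)^Suc m)" for m
  proof -
    have "(\<lambda>n. emeasure M (F - G m n)) \<longlonglongrightarrow> emeasure M (\<Inter>n. F - G m n)"
    proof (rule Lim_emeasure_decseq)
      show "range (\<lambda>n. F - G m n) \<subseteq> sets M" using Gs F by auto
      show "decseq (\<lambda>n. F - G m n)" unfolding decseq_def G_def by auto
      show "emeasure M (F - G m n) \<noteq> \<infinity>" for n
        using F emeasure_mono[of "F - G m n" F M] by (auto simp: top_unique)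
    qed
    moreover have "(\<Inter>n. F - G m n) = {}"
    proof -
      have "\<exists>n. \<omega> \<in> G m n" if \<omega>: "\<omega> \<in> F" for \<omega>
      proof -
        have "eventually (\<lambda>j. dist (T1 j \<omega>) (u1 \<omega>) < 1 / real (Suc m)) sequentially"
          using T1(2)[OF \<omega>] by (rule tendstoD) simp
        then obtain n where "\<forall>j\<ge>n. dist (T1 j \<omega>) (u1 \<omega>) < 1 / real (Suc m)"
          unfolding eventually_sequentially by blast
        then have "\<omega> \<in> G m n" using \<omega> by (simp add: G_def dist_norm)
        then show ?thesis ..
      qed
      then show ?thesis by blast
    qed
    ultimately have "(\<lambda>n. emeasure M (F - G m n)) \<longlonglongrightarrow> 0" by (metis emeasure_empty)
    then have "eventually (\<lambda>n. emeasure M (F - G m n) < ennreal (\<epsilon>/4 * (1/2)^Suc m)) sequentially"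
      by (rule order_tendstoD(2)) (use eps in simp)
    then show ?thesis unfolding eventually_sequentially by blast
  qed
  then obtain nm where nm: "\<And>m. emeasure M (F - G m (nm m)) < ennreal (\<epsilon>/4 * (1/2)^Suc m)"
    by metis
  define Eg where "Eg = F \<inter> (\<Inter>m. G m (nm m))"
  have Egs: "Eg \<in> sets M" unfolding Eg_def using F Gs by auto
  have Egm: "emeasure M (F - Eg) \<le> ennreal (\<epsilon>/4)"
  proof -
    have hs: "(\<lambda>m. \<epsilon>/4 * (1/2::real)^Suc m) sums (\<epsilon>/4 * 1)"
      by (rule sums_mult[OF power_half_series])
    have "F - Eg = (\<Union>m. F - G m (nm m))" unfolding Eg_def by auto
    then have "emeasure M (F - Eg) \<le> (\<Sum>m. emeasure M (F - G m (nm m)))"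
    proof -
      have "range (\<lambda>m. F - G m (nm m)) \<subseteq> sets M" using Gs F by auto
      from emeasure_subadditive_countably[OF this] show ?thesis unfolding \<open>F - Eg = (\<Union>m. F - G m (nm m))\<close> .
    qed
    also have "\<dots> \<le> (\<Sum>m. ennreal (\<epsilon>/4 * (1/2)^Suc m))"
      by (intro suminf_le summableI) (use nm in \<open>auto intro: less_imp_le\<close>)
    also have "\<dots> = ennreal (\<Sum>m. \<epsilon>/4 * (1/2)^Suc m)"
      by (rule suminf_ennreal2) (use eps hs in \<open>auto simp: sums_iff\<close>)
    also have "(\<Sum>m. \<epsilon>/4 * (1/2::real)^Suc m) = \<epsilon>/4"
      using hs by (simp add: sums_iff)
    finally show ?thesis by simp
  qed

  have u0b: "u0 \<in> borel_measurable M"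
    by (rule borel_measurable_LIMSEQ_metric[of T0, OF borel_measurable_simple_function[OF T0(1)] T0(2)])
  define B where "B j = {\<omega> \<in> F. norm (u0 \<omega>) \<le> real j}" for j :: nat
  have Bs: "B j \<in> sets M" for j
  proof -
    have "B j = F \<inter> {\<omega> \<in> space M. norm (u0 \<omega>) \<le> real j}" unfolding B_def using Fsp by auto
    also have "\<dots> \<in> sets M" using F u0b by measurable
    finally show ?thesis .
  qed
  have "(\<lambda>j. emeasure M (F - B j)) \<longlonglongrightarrow> emeasure M (\<Inter>j. F - B j)"
  proof (rule Lim_emeasure_decseq)
    show "range (\<lambda>j. F - B j) \<subseteq> sets M" using Bs F by auto
    show "decseq (\<lambda>j. F - B j)" unfolding decseq_def B_def by auto
    show "emeasure M (F - B j) \<noteq> \<infinity>" for j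
      using F emeasure_mono[of "F - B j" F M] by (auto simp: top_unique)
  qed
  moreover have "(\<Inter>j. F - B j) = {}"
  proof -
    have "\<exists>j. \<omega> \<in> B j" if "\<omega> \<in> F" for \<omega>
    proof -
      obtain j where "norm (u0 \<omega>) \<le> real j" using real_arch_simple by blast
      then show ?thesis using that unfolding B_def by blast
    qed
    then show ?thesis by blast
  qed
  ultimately have "(\<lambda>j. emeasure M (F - B j)) \<longlonglongrightarrow> 0" by (metis emeasure_empty)
  then have "eventually (\<lambda>j. emeasure M (F - B j) < ennreal (\<epsilon>/4)) sequentially"
    by (rule order_tendstoD(2)) (use eps in simp)
  then obtain j0 where j0: "emeasure M (F - B j0) < ennreal (\<epsilon>/4)"
    unfolding eventually_sequentially by blast

  define Fe where "Fe = (H k \<inter> Eg \<inter> B j0) - N"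
  have Fes: "Fe \<in> sets M" unfolding Fe_def using Hs Egs Bs N(3) by auto
  have FeF: "Fe \<subseteq> F" unfolding Fe_def H_def by auto
  have Fem: "emeasure M (F - Fe) < ennreal \<epsilon>"
  proof -
    have "F - Fe \<subseteq> (F - H k) \<union> (F - Eg) \<union> (F - B j0) \<union> N" unfolding Fe_def by auto
    then have "emeasure M (F - Fe) \<le> emeasure M ((F - H k) \<union> (F - Eg) \<union> (F - B j0) \<union> N)"
      using Hs Egs Bs N(3) F by (intro emeasure_mono) auto
    also have "\<dots> \<le> emeasure M ((F - H k) \<union> (F - Eg) \<union> (F - B j0)) + emeasure M N"
      using Hs Egs Bs N(3) F by (intro emeasure_subadditive) auto
    also have "\<dots> \<le> emeasure M ((F - H k) \<union> (F - Eg)) + emeasure M (F - B j0) + emeasure M N"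
      using Hs Egs Bs N(3) F by (intro add_mono emeasure_subadditive) auto
    also have "\<dots> \<le> emeasure M (F - H k) + emeasure M (F - Eg) + emeasure M (F - B j0) + emeasure M N"
      using Hs Egs Bs N(3) F by (intro add_mono emeasure_subadditive order_refl) auto
    also have "\<dots> \<le> ennreal (\<epsilon>/4) + ennreal (\<epsilon>/4) + ennreal (\<epsilon>/4) + 0"
      using k Egm j0 N(2) by (intro add_mono) auto
    also have "\<dots> = ennreal (3 * \<epsilon> / 4)" using eps by (simp flip: ennreal_plus)
    also have "\<dots> < ennreal \<epsilon>" using eps by (simp add: ennreal_lessI)
    finally show ?thesis .
  qed

  have FeP: "\<omega> \<in> F \<and> \<omega> \<in> space M \<and> good_fun (\<phi> \<omega>) \<and> \<omega> \<in> H k \<and>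
      (\<forall>m j. nm m \<le> j \<longrightarrow> norm (T1 j \<omega> - u1 \<omega>) < 1 / real (Suc m)) \<and> norm (u0 \<omega>) \<le> real j0"
    if "\<omega> \<in> Fe" for \<omega>
  proof -
    have \<omega>: "\<omega> \<in> F" "\<omega> \<notin> N" "\<omega> \<in> H k" "\<omega> \<in> Eg" "\<omega> \<in> B j0" using that FeF unfolding Fe_def by auto
    have "good_fun (\<phi> \<omega>)" using \<omega>(1,2) N(1) Fsp by blast
    moreover have "\<forall>m j. nm m \<le> j \<longrightarrow> norm (T1 j \<omega> - u1 \<omega>) < 1 / real (Suc m)"
      using \<omega>(4) unfolding Eg_def G_def by blast
    ultimately show ?thesis using \<omega> Fsp unfolding B_def by blast
  qed
  have Apt: "\<phi> \<omega> x \<le> ennreal c0" if "\<omega> \<in> Fe" "x \<in> closure D" "norm x < 1 / real (Suc k)" for \<omega> x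
  proof (rule lsc_D[of "\<phi> \<omega>" D "1 / real (Suc k)"])
    show "lsc_fun (\<phi> \<omega>)" using FeP[OF that(1)] unfolding good_fun_def by blast
    show "\<forall>d\<in>D. norm d < 1 / real (Suc k) \<longrightarrow> \<phi> \<omega> d \<le> ennreal c0" using FeP[OF that(1)] unfolding H_def by blast
  qed (use that in auto)
  have Aint: "(\<integral>\<^sup>+\<omega>. (if \<omega> \<in> Fe then \<phi> \<omega> (g \<omega>) else 0) \<partial>M) \<le> 1"
    if "\<And>\<omega>. \<omega> \<in> Fe \<Longrightarrow> g \<omega> \<in> closure D \<and> norm (g \<omega>) < 1 / real (Suc k)" for g
  proof -
    have "(\<integral>\<^sup>+\<omega>. (if \<omega> \<in> Fe then \<phi> \<omega> (g \<omega>) else 0) \<partial>M) \<le> (\<integral>\<^sup>+\<omega>. ennreal c0 * indicator Fe \<omega> \<partial>M)"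
      by (intro nn_integral_mono) (use Apt that in \<open>auto simp: indicator_def\<close>)
    also have "\<dots> = ennreal c0 * emeasure M Fe" using Fes by (rule nn_integral_cmult_indicator)
    also have "\<dots> \<le> 1" using c0A Fes FeF by blast
    finally show ?thesis .
  qed
  have Offint: "(\<integral>\<^sup>+\<omega>. (if \<omega> \<in> Fe then 0 else \<phi> \<omega> (h \<omega>)) \<partial>M) \<le> (\<integral>\<^sup>+\<omega>. \<phi> \<omega> (h \<omega>) \<partial>M)" for h
    by (intro nn_integral_mono) auto
  have glueL: "\<alpha>1 + \<alpha>2 \<in> Lset w"
    if "\<alpha>1 \<in> Lset h" "\<alpha>2 > 0" "\<And>\<omega>. \<omega> \<notin> Fe \<Longrightarrow> w \<omega> = h \<omega>"
      "\<And>\<omega>. \<omega> \<in> Fe \<Longrightarrow> w \<omega> /\<^sub>R \<alpha>2 \<in> closure D \<and> norm (w \<omega> /\<^sub>R \<alpha>2) < 1 / real (Suc k)"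
    for \<alpha>1 \<alpha>2 w h
  proof -
    have a1: "\<alpha>1 > 0" "(\<integral>\<^sup>+\<omega>. \<phi> \<omega> (h \<omega> /\<^sub>R \<alpha>1) \<partial>M) \<le> 1" using that(1) by (auto simp: Lset_def)
    have "(\<integral>\<^sup>+\<omega>. \<phi> \<omega> (w \<omega> /\<^sub>R (\<alpha>1 + \<alpha>2)) \<partial>M) \<le> 1"
    proof (rule comb[OF AE0 Fes a1(1) that(2)])
      have "(\<integral>\<^sup>+\<omega>. (if \<omega> \<in> Fe then 0 else \<phi> \<omega> (w \<omega> /\<^sub>R \<alpha>1)) \<partial>M)
          = (\<integral>\<^sup>+\<omega>. (if \<omega> \<in> Fe then 0 else \<phi> \<omega> (h \<omega> /\<^sub>R \<alpha>1)) \<partial>M)"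
        using that(3) by (intro nn_integral_cong) auto
      also have "\<dots> \<le> 1" using Offint[of "\<lambda>\<omega>. h \<omega> /\<^sub>R \<alpha>1"] a1(2) by (rule order_trans)
      finally show "(\<integral>\<^sup>+\<omega>. (if \<omega> \<in> Fe then 0 else \<phi> \<omega> (w \<omega> /\<^sub>R \<alpha>1)) \<partial>M) \<le> 1" .
      show "(\<integral>\<^sup>+\<omega>. (if \<omega> \<in> Fe then \<phi> \<omega> (w \<omega> /\<^sub>R \<alpha>2) else 0) \<partial>M) \<le> 1"
        using Aint[of "\<lambda>\<omega>. w \<omega> /\<^sub>R \<alpha>2"] that(4) by blast
    qed
    then show ?thesis using a1 that(2) by (simp add: Lset_def)
  qed

  define w where "w = (\<lambda>\<omega>. if \<omega> \<in> Fe then u1 \<omega> else u0 \<omega>)"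
  have wsm: "strongly_measurable M w"
    unfolding strongly_measurable_def
  proof (intro exI[of _ "\<lambda>n \<omega>. if \<omega> \<in> Fe then T1 n \<omega> else T0 n \<omega>"] conjI ballI allI)
    show "simple_function M (\<lambda>\<omega>. if \<omega> \<in> Fe then T1 n \<omega> else T0 n \<omega>)" for n
      by (rule simple_glue[OF Fes FeF F(1) T1(1) T0(1)])
    show "(\<lambda>n. if \<omega> \<in> Fe then T1 n \<omega> else T0 n \<omega>) \<longlonglongrightarrow> w \<omega>" if "\<omega> \<in> space M" for \<omega>
      using T1(2)[of \<omega>] T0(2)[OF that] FeF unfolding w_def by (cases "\<omega> \<in> Fe") auto
  qed
  have wL: "Lset w \<noteq> {}"
  proof -
    define \<alpha>2 where "\<alpha>2 = (\<bar>C\<bar> + 1) * real (Suc k)"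
    have "\<alpha>u + \<alpha>2 \<in> Lset w"
    proof (rule glueL[OF \<alpha>u])
      show "\<alpha>2 > 0" unfolding \<alpha>2_def by (simp add: add_nonneg_pos)
      show "w \<omega> = u0 \<omega>" if "\<omega> \<notin> Fe" for \<omega> using that by (simp add: w_def)
      fix \<omega> assume \<omega>: "\<omega> \<in> Fe"
      then have \<omega>F: "\<omega> \<in> F" using FeF by blast
      have "w \<omega> /\<^sub>R \<alpha>2 = inverse \<alpha>2 *\<^sub>R (u1 \<omega> - 0)" using \<omega> by (simp add: w_def)
      also have "\<dots> \<in> closure D" by (rule clD[OF clu1[OF \<omega>F] clR[OF inR0(1)]])
      finally show "w \<omega> /\<^sub>R \<alpha>2 \<in> closure D \<and> norm (w \<omega> /\<^sub>R \<alpha>2) < 1 / real (Suc k)"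
        using small_norm[of "u1 \<omega>" "\<bar>C\<bar>" k] C \<omega>F \<omega> unfolding \<alpha>2_def w_def by force
    qed
    then show ?thesis by blast
  qed
  have wE: "\<exists>s. simple_function M s \<and> s \<in> orlicz_L M \<phi> \<and> lux_norm M \<phi> (\<lambda>\<omega>. w \<omega> - s \<omega>) < \<eta>"
    if \<eta>: "\<eta> > 0" for \<eta>
  proof -
    obtain n0 where n0: "inverse (real (Suc n0)) < \<eta>/2" using reals_Archimedean[of "\<eta>/2"] \<eta> by auto
    have "\<eta> / (4 * real (Suc k)) > 0" using \<eta> by simp
    then obtain m where m: "inverse (real (Suc m)) < \<eta> / (4 * real (Suc k))" using reals_Archimedean by blast
    define j where "j = nm m"
    define s where "s = (\<lambda>\<omega>. if \<omega> \<in> Fe then T1 j \<omega> else S0 n0 \<omega>)"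
    have ss: "simple_function M s" unfolding s_def by (rule simple_glue[OF Fes FeF F(1) T1(1) S0(1)])
    have sL: "s \<in> orlicz_L M \<phi>"
    proof -
      obtain K where K: "K \<ge> 0" "\<And>\<omega>. \<omega> \<in> F \<Longrightarrow> norm (T1 j \<omega>) \<le> K"
        using simple_bound[OF T1(1)[of j]] sF by auto
      from S0(2)[of n0] obtain \<alpha>s where \<alpha>s: "\<alpha>s \<in> Lset (S0 n0)" unfolding Lin by blast
      have "\<alpha>s + (K + 1) * real (Suc k) \<in> Lset s"
      proof (rule glueL[OF \<alpha>s])
        show "(K + 1) * real (Suc k) > 0" using K by (simp add: add_nonneg_pos)
        show "s \<omega> = S0 n0 \<omega>" if "\<omega> \<notin> Fe" for \<omega> using that by (simp add: s_def)
        fix \<omega> assume \<omega>: "\<omega> \<in> Fe"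
        then have \<omega>F: "\<omega> \<in> F" using FeF by blast
        have "s \<omega> /\<^sub>R ((K + 1) * real (Suc k)) = inverse ((K + 1) * real (Suc k)) *\<^sub>R (T1 j \<omega> - 0)"
          using \<omega> by (simp add: s_def)
        also have "\<dots> \<in> closure D" by (rule clD[OF clR[OF inR0(3)[OF \<omega>F]] clR[OF inR0(1)]])
        finally show "s \<omega> /\<^sub>R ((K + 1) * real (Suc k)) \<in> closure D \<and> norm (s \<omega> /\<^sub>R ((K + 1) * real (Suc k))) < 1 / real (Suc k)"
          using small_norm[of "T1 j \<omega>" K k] K(2)[OF \<omega>F] \<omega> unfolding s_def by force
      qed
      then show ?thesis unfolding Lin using simple_strongly[OF ss] by blast
    qed
    have lux0: "lux_norm M \<phi> (\<lambda>\<omega>. u0 \<omega> - S0 n0 \<omega>) < \<eta>/2"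
      using S0(3)[of n0] n0 by (simp add: inverse_eq_divide)
    have luxws: "lux_norm M \<phi> (\<lambda>\<omega>. w \<omega> - s \<omega>) < \<eta>"
    proof (cases "Lset (\<lambda>\<omega>. u0 \<omega> - S0 n0 \<omega>) = {}")
      case False
      have "Inf (Lset (\<lambda>\<omega>. u0 \<omega> - S0 n0 \<omega>)) < \<eta>/2" using lux0 unfolding lux .
      then obtain \<alpha>1 where \<alpha>1: "\<alpha>1 \<in> Lset (\<lambda>\<omega>. u0 \<omega> - S0 n0 \<omega>)" "\<alpha>1 < \<eta>/2"
        using cInf_lessD[OF False] by blast
      have "\<alpha>1 + \<eta>/4 \<in> Lset (\<lambda>\<omega>. w \<omega> - s \<omega>)"
      proof (rule glueL[OF \<alpha>1(1)])
        show "\<eta>/4 > 0" using \<eta> by simp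
        show "w \<omega> - s \<omega> = u0 \<omega> - S0 n0 \<omega>" if "\<omega> \<notin> Fe" for \<omega> using that by (simp add: w_def s_def)
        fix \<omega> assume \<omega>: "\<omega> \<in> Fe"
        then have \<omega>F: "\<omega> \<in> F" using FeF by blast
        have eq: "(w \<omega> - s \<omega>) /\<^sub>R (\<eta>/4) = inverse (\<eta>/4) *\<^sub>R (u1 \<omega> - T1 j \<omega>)"
          using \<omega> by (simp add: w_def s_def)
        have "(w \<omega> - s \<omega>) /\<^sub>R (\<eta>/4) \<in> closure D"
          unfolding eq by (rule clD[OF clu1[OF \<omega>F] clR[OF inR0(3)[OF \<omega>F]]])
        moreover have "norm ((w \<omega> - s \<omega>) /\<^sub>R (\<eta>/4)) < 1 / real (Suc k)"
        proof -
          have "norm (u1 \<omega> - T1 j \<omega>) < inverse (real (Suc m))"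
            using FeP[OF \<omega>] unfolding j_def by (simp add: norm_minus_commute inverse_eq_divide)
          then have "norm (u1 \<omega> - T1 j \<omega>) < \<eta> / (4 * real (Suc k))" using m by linarith
          then have "inverse (\<eta>/4) * norm (u1 \<omega> - T1 j \<omega>) < inverse (\<eta>/4) * (\<eta> / (4 * real (Suc k)))"
            using \<eta> by (intro mult_strict_left_mono) auto
          also have "\<dots> = 1 / real (Suc k)" using \<eta> by (simp add: field_simps)
          finally show ?thesis unfolding eq using \<eta> by simp
        qed
        ultimately show "(w \<omega> - s \<omega>) /\<^sub>R (\<eta>/4) \<in> closure D \<and> norm ((w \<omega> - s \<omega>) /\<^sub>R (\<eta>/4)) < 1 / real (Suc k)" ..
      qed
      then have "lux_norm M \<phi> (\<lambda>\<omega>. w \<omega> - s \<omega>) \<le> \<alpha>1 + \<eta>/4" by (rule lux_le)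
      then show ?thesis using \<alpha>1(2) \<eta> by linarith
    next
      case True
      have "Lset (\<lambda>\<omega>. w \<omega> - s \<omega>) = {}"
      proof (rule ccontr)
        assume "Lset (\<lambda>\<omega>. w \<omega> - s \<omega>) \<noteq> {}"
        then obtain \<beta> where \<beta>: "\<beta> \<in> Lset (\<lambda>\<omega>. w \<omega> - s \<omega>)" by blast
        obtain K0 where K0: "K0 \<ge> 0" "\<And>\<omega>. \<omega> \<in> space M \<Longrightarrow> norm (S0 n0 \<omega>) \<le> K0"
          using simple_bound[OF S0(1)[of n0]] by auto
        define \<alpha>2 where "\<alpha>2 = (real j0 + K0 + 1) * real (Suc k)"
        have "\<beta> + \<alpha>2 \<in> Lset (\<lambda>\<omega>. u0 \<omega> - S0 n0 \<omega>)"
        proof (rule glueL[OF \<beta>])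
          show "\<alpha>2 > 0" unfolding \<alpha>2_def using K0 by (simp add: add_nonneg_pos)
          show "u0 \<omega> - S0 n0 \<omega> = w \<omega> - s \<omega>" if "\<omega> \<notin> Fe" for \<omega> using that by (simp add: w_def s_def)
          fix \<omega> assume \<omega>: "\<omega> \<in> Fe"
          have \<omega>M: "\<omega> \<in> space M" using FeP[OF \<omega>] by blast
          have c: "(u0 \<omega> - S0 n0 \<omega>) /\<^sub>R \<alpha>2 \<in> closure D" by (rule clD[OF clu0[OF \<omega>M] clR[OF inR0(4)[OF \<omega>M]]])
          have "norm (u0 \<omega> - S0 n0 \<omega>) \<le> norm (u0 \<omega>) + norm (S0 n0 \<omega>)" by (rule norm_triangle_ineq4)
          also have "\<dots> \<le> real j0 + K0" using FeP[OF \<omega>] K0(2)[OF \<omega>M] by linarith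
          finally have "norm ((u0 \<omega> - S0 n0 \<omega>) /\<^sub>R \<alpha>2) < 1 / real (Suc k)"
            unfolding \<alpha>2_def by (rule small_norm)
          with c show "(u0 \<omega> - S0 n0 \<omega>) /\<^sub>R \<alpha>2 \<in> closure D \<and> norm ((u0 \<omega> - S0 n0 \<omega>) /\<^sub>R \<alpha>2) < 1 / real (Suc k)" ..
        qed
        with True show False by blast
      qed
      then have "lux_norm M \<phi> (\<lambda>\<omega>. w \<omega> - s \<omega>) = lux_norm M \<phi> (\<lambda>\<omega>. u0 \<omega> - S0 n0 \<omega>)"
        using True by (simp add: lux)
      then show ?thesis using lux0 \<eta> by linarith
    qed
    show ?thesis using ss sL luxws by blast
  qed
  have "w \<in> orlicz_E M \<phi>"
    unfolding orlicz_E_def using wsm wL wE Lin by blast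
  then show ?thesis using Fes FeF Fem unfolding w_def by blast
qed

theorem lemma3p3p2:
  fixes M :: "'a measure" and \<phi> :: "'a \<Rightarrow> 'b::banach \<Rightarrow> ennreal"
  assumes "emeasure M (space M) > 0"
    and "orlicz_integrand M \<phi>"
  shows "almost_decomposable M (orlicz_E M \<phi>) \<and> almost_decomposable M (orlicz_E_sigma M \<phi>)"
proof
  show "almost_decomposable M (orlicz_E M \<phi>)"
    unfolding almost_decomposable_def
  proof (intro ballI impI allI)
    fix u0 u1 :: "'a \<Rightarrow> 'b" and F and \<epsilon> :: real
    assume u0: "u0 \<in> orlicz_E M \<phi>" and F: "F \<in> sets M" "emeasure M F < \<infinity>" and eps: "(\<epsilon>::real) > 0"
      and u1: "strongly_measurable (restrict_space M F) u1 \<and> (\<exists>C. \<forall>\<omega>\<in>F. norm (u1 \<omega>) \<le> C)"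
    have u1m: "strongly_measurable (restrict_space M F) u1" using u1 by (rule conjunct1)
    have "\<exists>C. \<forall>\<omega>\<in>F. norm (u1 \<omega>) \<le> C" using u1 by (rule conjunct2)
    then obtain C where C: "\<forall>\<omega>\<in>F. norm (u1 \<omega>) \<le> C" by (elim exE)
    show "\<exists>F\<^sub>\<epsilon>\<in>sets M. F\<^sub>\<epsilon> \<subseteq> F \<and> emeasure M (F - F\<^sub>\<epsilon>) < ennreal \<epsilon> \<and>
            (\<lambda>\<omega>. if \<omega> \<in> F\<^sub>\<epsilon> then u1 \<omega> else u0 \<omega>) \<in> orlicz_E M \<phi>"
      by (rule main_glue[OF assms(2) u0 F eps u1m C])
  qed
  show "almost_decomposable M (orlicz_E_sigma M \<phi>)"
    unfolding almost_decomposable_def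
  proof (intro ballI impI allI)
    fix u0 u1 :: "'a \<Rightarrow> 'b" and F and \<epsilon> :: real
    assume u0: "u0 \<in> orlicz_E_sigma M \<phi>" and F: "F \<in> sets M" "emeasure M F < \<infinity>" and eps: "(\<epsilon>::real) > 0"
      and u1: "strongly_measurable (restrict_space M F) u1 \<and> (\<exists>C. \<forall>\<omega>\<in>F. norm (u1 \<omega>) \<le> C)"
    have u1m: "strongly_measurable (restrict_space M F) u1" using u1 by (rule conjunct1)
    have "\<exists>C. \<forall>\<omega>\<in>F. norm (u1 \<omega>) \<le> C" using u1 by (rule conjunct2)
    then obtain C where C: "\<forall>\<omega>\<in>F. norm (u1 \<omega>) \<le> C" by (elim exE)
    have u0E: "u0 \<in> orlicz_E M \<phi>" using u0 unfolding orlicz_E_sigma_def mem_Collect_eq by (rule conjunct1)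
    have "\<exists>S. sigma_finite_set M S \<and> (AE \<omega> in M. \<omega> \<notin> S \<longrightarrow> u0 \<omega> = 0)"
      using u0 unfolding orlicz_E_sigma_def mem_Collect_eq by (rule conjunct2)
    then obtain S where S0: "sigma_finite_set M S \<and> (AE \<omega> in M. \<omega> \<notin> S \<longrightarrow> u0 \<omega> = 0)" by (elim exE)
    have S: "sigma_finite_set M S" "AE \<omega> in M. \<omega> \<notin> S \<longrightarrow> u0 \<omega> = 0" using S0 by simp_all
    have "\<exists>A::nat \<Rightarrow> 'a set. range A \<subseteq> sets M \<and> (\<forall>i. emeasure M (A i) < \<infinity>) \<and> S = (\<Union>i. A i)"
      using S(1) unfolding sigma_finite_set_def .
    then obtain A :: "nat \<Rightarrow> 'a set" where A0: "range A \<subseteq> sets M \<and> (\<forall>i. emeasure M (A i) < \<infinity>) \<and> S = (\<Union>i. A i)"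
      by (elim exE)
    have A: "range A \<subseteq> sets M" "\<And>i. emeasure M (A i) < \<infinity>" "S = (\<Union>i. A i)" using A0 by simp_all
    have SF: "sigma_finite_set M (S \<union> F)"
      unfolding sigma_finite_set_def
    proof (intro exI[of _ "\<lambda>i. A i \<union> F"] conjI allI)
      show "range (\<lambda>i. A i \<union> F) \<subseteq> sets M" using A(1) F(1) by auto
      show "emeasure M (A i \<union> F) < \<infinity>" for i
      proof -
        have "emeasure M (A i \<union> F) \<le> emeasure M (A i) + emeasure M F"
          using A(1) F(1) by (intro emeasure_subadditive) auto
        also have "\<dots> < \<infinity>" using A(2)[of i] F(2) by simp
        finally show ?thesis .
      qed
      show "S \<union> F = (\<Union>i. A i \<union> F)" using A(3) by auto
    qed
    from main_glue[OF assms(2) u0E F eps u1m C]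
    obtain Fe where Fe: "Fe \<in> sets M" "Fe \<subseteq> F" "emeasure M (F - Fe) < ennreal \<epsilon>"
      "(\<lambda>\<omega>. if \<omega> \<in> Fe then u1 \<omega> else u0 \<omega>) \<in> orlicz_E M \<phi>" by blast
    have "AE \<omega> in M. \<omega> \<notin> S \<union> F \<longrightarrow> (if \<omega> \<in> Fe then u1 \<omega> else u0 \<omega>) = 0"
      using S(2)
    proof (rule AE_mp, intro AE_I2 impI)
      fix \<omega> assume h: "\<omega> \<notin> S \<longrightarrow> u0 \<omega> = 0" "\<omega> \<notin> S \<union> F"
      then have "\<omega> \<notin> Fe" using Fe(2) by blast
      then show "(if \<omega> \<in> Fe then u1 \<omega> else u0 \<omega>) = 0" using h by simp
    qed
    then have "(\<lambda>\<omega>. if \<omega> \<in> Fe then u1 \<omega> else u0 \<omega>) \<in> orlicz_E_sigma M \<phi>"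
      unfolding orlicz_E_sigma_def mem_Collect_eq using Fe(4) SF by (intro conjI exI[of _ "S \<union> F"])
    then show "\<exists>F\<^sub>\<epsilon>\<in>sets M. F\<^sub>\<epsilon> \<subseteq> F \<and> emeasure M (F - F\<^sub>\<epsilon>) < ennreal \<epsilon> \<and>
            (\<lambda>\<omega>. if \<omega> \<in> F\<^sub>\<epsilon> then u1 \<omega> else u0 \<omega>) \<in> orlicz_E_sigma M \<phi>"
      using Fe(1-3) by blast
  qed
qed

end
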